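(* Let $a,d$ be positive integers with $d$ not a perfect square, $\alpha=a+\sqrt d$, $N_\alpha=a^2-d$, and suppose $-N_\alpha$ is an odd perfect square. Let $t,u$ be positive integers with $\varepsilon=(t+u\sqrt d)/2$ a unit of the ring of integers of $\mathbb{Q}(\sqrt d)$, define $x_k+y_k\sqrt d=\alpha\varepsilon^{2k}$, suppose $y_{-1}>1$, and suppose that for some $\sigma\in\{1,-1\}$, $y_\sigma$ is the square of an integer. (a) If $t^2-du^2=4$, then $t\equiv2\pmod4$ and $u\equiv0\pmod4$. (b) If $t^2-du^2=-4$, then $u\equiv2\pmod4$. *)

theory Defs
  imports "HOL-Analysis.Analysis" "HOL-Computational_Algebra.Polynomial"
begin

text \<open>For integers a, d, t, u and an integer k, the rational coordinate y_k defined by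
  x_k + y_k sqrt d = alpha * epsilon^(2k), where alpha = a + sqrt d and
  epsilon = (t + u sqrt d)/2 (x_k, y_k rational; unique when d is not a perfect square).\<close>
definition yk :: "int \<Rightarrow> int \<Rightarrow> int \<Rightarrow> int \<Rightarrow> int \<Rightarrow> rat" where
  "yk a d t u k = (THE y::rat. \<exists>x::rat.
      (of_int a + sqrt (of_int d)) * ((of_int t + of_int u * sqrt (of_int d)) / 2) powi (2 * k)
        = of_rat x + of_rat y * sqrt (of_int d))"

definition is_unit_OK :: "real \<Rightarrow> bool" where
  "is_unit_OK e \<longleftrightarrow> e \<noteq> 0 \<and> algebraic_int e \<and> algebraic_int (inverse e)"

end

theory Submission imports Defs begin
lemma odd_sq8: fixes x :: int assumes "odd x" shows "\<exists>k. x^2 = 8*k+1"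
proof -
  obtain j where j: "x = 2*j+1" using assms oddE by blast
  have "even (j*(j+1))" by simp
  then obtain k where k: "j*(j+1) = 2*k" by blast
  have "x^2 = 4*(j*(j+1)) + 1" unfolding j by (simp add: power2_eq_square algebra_simps)
  with k show ?thesis by auto
qed

lemma even_sq4: fixes x :: int assumes "even x" shows "\<exists>k. x^2 = 4*k"
proof -
  obtain j where j: "x = 2*j" using assms by blast
  show ?thesis unfolding j by (rule exI[of _ "j^2"]) (simp add: power2_eq_square)
qed

lemma arith_core:
  fixes a d t u s M :: int
  assumes dd: "d = a^2+s^2" and s: "odd s"
    and N: "t^2-d*u^2=4 \<or> t^2-d*u^2 = -4"
    and Y: "t^2+d*u^2+2*a*t*u = 4*M \<or> t^2+d*u^2-2*a*t*u = 4*M"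
  shows "(t^2-d*u^2=4 \<longrightarrow> t mod 4 = 2 \<and> u mod 4 = 0) \<and> (t^2-d*u^2 = -4 \<longrightarrow> u mod 4 = 2)"
proof -
  obtain S where S: "s^2 = 8*S+1" using odd_sq8[OF s] by blast
  have dmod: "d mod 4 = 1 \<or> d mod 4 = 2"
  proof (cases "even a")
    case True
    then obtain A where "a^2 = 4*A" using even_sq4 by blast
    then have "d = 4*(A+2*S)+1" using dd S by simp
    then show ?thesis by presburger
  next
    case False
    then obtain A where "a^2 = 8*A+1" using odd_sq8 by blast
    then have "d = 4*(2*A+2*S)+2" using dd S by simp
    then show ?thesis by presburger
  qed
  have te: "even t"
  proof (rule ccontr)
    assume to: "odd t"
    have "2*(t*(t+a*u)) = 4*M + (t^2-d*u^2) \<or> 2*(t*(t-a*u)) = 4*M + (t^2-d*u^2)"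
      using Y by (auto simp: power2_eq_square algebra_simps)
    then have "2*(t*(t+a*u)) = 4*M + 4 \<or> 2*(t*(t+a*u)) = 4*M - 4 \<or>
               2*(t*(t-a*u)) = 4*M + 4 \<or> 2*(t*(t-a*u)) = 4*M - 4" using N by auto
    then have "t*(t+a*u) = 2*(M+1) \<or> t*(t+a*u) = 2*(M-1) \<or>
               t*(t-a*u) = 2*(M+1) \<or> t*(t-a*u) = 2*(M-1)" by auto
    then have "even (t*(t+a*u)) \<or> even (t*(t-a*u))" by (metis dvd_triv_left)
    then have "odd (a*u)" using to by auto
    then have ao: "odd a" "odd u" by auto
    then have "even d" using dd s by auto
    then have o: "odd (t^2 - d*u^2)" using to by auto
    show False using N o by (elim disjE) simp_all
  qed
  then obtain T where T: "t = 2*T" by blast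
  have ue: "even u"
  proof (rule ccontr)
    assume "odd u"
    then obtain V where V: "u^2 = 8*V+1" using odd_sq8 by blast
    have "d*u^2 = 8*(d*V) + d" unfolding V by (simp add: algebra_simps)
    moreover have "t^2 = 4*T^2" unfolding T by (simp add: power2_eq_square)
    ultimately have "4*T^2 - 8*(d*V) - d = 4 \<or> 4*T^2 - 8*(d*V) - d = -4" using N by auto
    then have "d mod 4 = 0" by presburger
    then show False using dmod by simp
  qed
  then obtain U where U: "u = 2*U" by blast
  have NN: "t^2 - d*u^2 = 4*(T^2 - d*U^2)" unfolding T U by (simp add: power2_eq_square algebra_simps)
  have A: "t mod 4 = 2 \<and> u mod 4 = 0" if h: "t^2-d*u^2=4"
  proof -
    have h1: "T^2 - d*U^2 = 1" using h NN by simp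
    have To: "odd T"
    proof
      assume "even T"
      then obtain X where X: "T^2 = 4*X" using even_sq4 by blast
      have "d*U^2 = 2*(2*X-1)+1" using h1 X by (simp add: algebra_simps)
      then have "odd (d*U^2)" by (metis odd_two_times_div_two_succ even_add odd_one dvd_triv_left)
      then have "odd U" by auto
      then obtain W where W: "U^2 = 8*W+1" using odd_sq8 by blast
      have "d*U^2 = 8*(d*W) + d" unfolding W by (simp add: algebra_simps)
      then have "4*X - 8*(d*W) - d = 1" using h1 X by simp
      then have "d mod 4 = 3" by presburger
      then show False using dmod by simp
    qed
    then obtain X where X: "T^2 = 8*X+1" using odd_sq8 by blast
    have Ue: "even U"
    proof (rule ccontr)
      assume "odd U"
      then obtain W where W: "U^2 = 8*W+1" using odd_sq8 by blast
      have "d*U^2 = 8*(d*W) + d" unfolding W by (simp add: algebra_simps)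
      then have "8*X+1 - 8*(d*W) - d = 1" using h1 X by simp
      then have "d mod 4 = 0" by presburger
      then show False using dmod by simp
    qed
    show ?thesis using To Ue T U by presburger
  qed
  have B: "u mod 4 = 2" if h: "t^2-d*u^2=-4"
  proof -
    have h1: "T^2 - d*U^2 = -1" using h NN by simp
    have "odd U"
    proof
      assume "even U"
      then obtain W where "U = 2*W" by blast
      then have "T^2 = 4*(d*W^2) - 1" using h1 by (simp add: power2_eq_square algebra_simps)
      moreover have "T^2 mod 4 = 0 \<or> T^2 mod 4 = 1"
      proof (cases "even T")
        case True then show ?thesis using even_sq4 by fastforce
      next
        case False then obtain k where "T^2 = 8*k+1" using odd_sq8 by blast
        then show ?thesis by presburger
      qed
      ultimately show False by presburger
    qed
    then show ?thesis using U by presburger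
  qed
  show ?thesis using A B by blast
qed
lemma sqrt_irr:
  fixes d :: int
  assumes "d > 0" "\<not> (\<exists>r::int. d = r ^ 2)"
  shows "sqrt (real_of_int d) \<notin> \<rat>"
proof
  assume q: "sqrt (real_of_int d) \<in> \<rat>"
  have "algebraic_int (real_of_int d)" by (rule int_imp_algebraic_int) simp
  then have "algebraic_int (sqrt (real_of_int d))" by (rule algebraic_int_sqrt)
  then have "sqrt (real_of_int d) \<in> \<int>" using q rational_algebraic_int_is_int by blast
  then obtain r where r: "sqrt (real_of_int d) = of_int r" by (auto elim: Ints_cases)
  have "real_of_int d = (sqrt (real_of_int d))^2" using assms(1) by simp
  also have "\<dots> = real_of_int (r^2)" using r by simp
  finally have "d = r^2" by linarith
  then show False using assms(2) by blast
qed

lemma uniq_rat: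
  fixes D :: real
  assumes "D \<notin> \<rat>" "of_rat x + of_rat y * D = of_rat x' + of_rat y' * D"
  shows "y = y'"
proof (rule ccontr)
  assume ne: "y \<noteq> y'"
  have "(of_rat y - of_rat y') * D = of_rat x' - of_rat x" using assms(2) by (simp add: algebra_simps)
  then have "D = of_rat ((x' - x) / (y - y'))" using ne
    by (simp add: of_rat_divide of_rat_diff field_simps)
  then have "D \<in> \<rat>" by (simp add: Rats_def)
  then show False using assms(1) by blast
qed

lemma yk_eq:
  assumes irr: "sqrt (real_of_int d) \<notin> \<rat>"
    and h: "(of_int a + sqrt (of_int d)) * ((of_int t + of_int u * sqrt (of_int d)) / 2) powi (2 * k)
        = of_rat X + of_rat Y * sqrt (of_int d)"
  shows "yk a d t u k = Y"
  unfolding yk_def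
proof (rule the_equality)
  show "\<exists>x. (of_int a + sqrt (of_int d)) * ((of_int t + of_int u * sqrt (of_int d)) / 2) powi (2 * k)
        = of_rat x + of_rat Y * sqrt (of_int d)" using h by blast
next
  fix y assume "\<exists>x. (of_int a + sqrt (of_int d)) * ((of_int t + of_int u * sqrt (of_int d)) / 2) powi (2 * k)
        = of_rat x + of_rat y * sqrt (of_int d)"
  then obtain x where "(of_int a + sqrt (of_int d)) * ((of_int t + of_int u * sqrt (of_int d)) / 2) powi (2 * k)
        = of_rat x + of_rat y * sqrt (of_int d)" by blast
  with h have "of_rat x + of_rat y * sqrt (of_int d) = of_rat X + of_rat Y * sqrt (real_of_int d)" by simp
  then show "y = Y" using uniq_rat[OF irr] by blast
qed

theorem lemma5p4:
  fixes a d t u :: int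
  assumes "a > 0" and "d > 0"
    and "\<not> (\<exists>r::int. d = r ^ 2)"
    and "\<exists>s::int. odd s \<and> -(a ^ 2 - d) = s ^ 2"
    and "t > 0" and "u > 0"
    and "is_unit_OK ((of_int t + of_int u * sqrt (of_int d)) / 2)"
    and "yk a d t u (-1) > 1"
    and "\<exists>\<sigma>\<in>{1, -1::int}. \<exists>m::int. yk a d t u \<sigma> = of_int (m ^ 2)"
  shows "(t ^ 2 - d * u ^ 2 = 4 \<longrightarrow> t mod 4 = 2 \<and> u mod 4 = 0)
       \<and> (t ^ 2 - d * u ^ 2 = -4 \<longrightarrow> u mod 4 = 2)"
proof -
  obtain s where s: "odd s" "d = a^2 + s^2" using assms(4) by auto
  have irr: "sqrt (real_of_int d) \<notin> \<rat>" using sqrt_irr assms(2,3) by blast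
  define D where "D = sqrt (real_of_int d)"
  have D2: "D * D = real_of_int d" unfolding D_def using assms(2) by simp
  define e where "e = (real_of_int t + real_of_int u * D) / 2"
  define f where "f = (real_of_int t - real_of_int u * D) / 2"
  have y1: "yk a d t u 1 = of_int (t^2 + d*u^2 + 2*a*t*u) / 4"
  proof (rule yk_eq[OF irr, where X = "of_int (a*(t^2+d*u^2) + 2*t*u*d) / 4"])
    have "(of_int a + D) * e powi (2*1) = (of_int a + D) * e^2" by simp
    also have "\<dots> = real_of_int (a*(t^2+d*u^2) + 2*t*u*d) / 4 + real_of_int (t^2 + d*u^2 + 2*a*t*u) / 4 * D"
      unfolding e_def by (simp add: power2_eq_square field_simps flip: D2)
    finally show "(of_int a + sqrt (of_int d)) * ((of_int t + of_int u * sqrt (of_int d)) / 2) powi (2 * 1) =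
      of_rat (of_int (a*(t^2+d*u^2) + 2*t*u*d) / 4) + of_rat (of_int (t^2 + d*u^2 + 2*a*t*u) / 4) * sqrt (of_int d)"
      unfolding D_def e_def by (simp add: of_rat_divide of_rat_add of_rat_diff of_rat_mult of_rat_power of_rat_of_int_eq)
  qed
  have ym1: "yk a d t u (-1) = of_int (t^2 + d*u^2 - 2*a*t*u) / 4"
    if N: "t^2 - d*u^2 = 4 \<or> t^2 - d*u^2 = -4"
  proof (rule yk_eq[OF irr, where X = "of_int (a*(t^2+d*u^2) - 2*t*u*d) / 4"])
    have ef: "e * f = real_of_int (t^2 - d*u^2) / 4" unfolding e_def f_def using D2
      by (simp add: power2_eq_square field_simps)
    have "(t^2 - d*u^2)^2 = 16" using N by auto
    then have "(real_of_int (t^2 - d*u^2))^2 = 16" by (metis of_int_eq_iff of_int_numeral of_int_power)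
    then have "(e*f)^2 = 1" unfolding ef by (simp only: power_divide) simp
    then have "e^2 * f^2 = 1" by (simp add: power_mult_distrib)
    then have inv: "inverse (e^2) = f^2" by (rule inverse_unique)
    have "(of_int a + D) * e powi (2*(-1)) = (of_int a + D) * f^2"
      using inv by (simp add: power_int_minus)
    also have "\<dots> = real_of_int (a*(t^2+d*u^2) - 2*t*u*d) / 4 + real_of_int (t^2 + d*u^2 - 2*a*t*u) / 4 * D"
      unfolding f_def by (simp add: power2_eq_square field_simps flip: D2)
    finally show "(of_int a + sqrt (of_int d)) * ((of_int t + of_int u * sqrt (of_int d)) / 2) powi (2 * (-1)) =
      of_rat (of_int (a*(t^2+d*u^2) - 2*t*u*d) / 4) + of_rat (of_int (t^2 + d*u^2 - 2*a*t*u) / 4) * sqrt (of_int d)"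
      unfolding D_def e_def by (simp add: of_rat_divide of_rat_add of_rat_diff of_rat_mult of_rat_power of_rat_of_int_eq)
  qed
  obtain \<sigma> m where sm: "\<sigma> \<in> {1, -1::int}" "yk a d t u \<sigma> = of_int (m ^ 2)" using assms(9) by blast
  have key: "t^2+d*u^2+2*a*t*u = 4*m^2 \<or> t^2+d*u^2-2*a*t*u = 4*m^2"
    if N: "t^2 - d*u^2 = 4 \<or> t^2 - d*u^2 = -4"
  proof (cases "\<sigma> = 1")
    case True
    then have "(of_int (t^2 + d*u^2 + 2*a*t*u) :: rat) = of_int (4*m^2)" using sm y1 by simp
    then have "t^2 + d*u^2 + 2*a*t*u = 4*m^2" by (simp only: of_int_eq_iff)
    then show ?thesis by blast
  next
    case False
    then have "\<sigma> = -1" using sm by auto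
    then have "(of_int (t^2 + d*u^2 - 2*a*t*u) :: rat) = of_int (4*m^2)" using sm ym1[OF N] by simp
    then have "t^2 + d*u^2 - 2*a*t*u = 4*m^2" by (simp only: of_int_eq_iff)
    then show ?thesis by blast
  qed
  show ?thesis
  proof (cases "t^2 - d*u^2 = 4 \<or> t^2 - d*u^2 = -4")
    case True
    show ?thesis using arith_core[OF s(2) s(1) True key[OF True]] .
  next
    case False then show ?thesis by auto
  qed
qed
end
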